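(* Let $u_n=(-1)^{s_2(n)}$, where $s_2(n)$ is the sum of the binary digits of $n$. Then \[\prod_{n=0}^\infty\left(\frac{(4n+3)(2n+2)}{(4n+5)(2n+3)}\right)^{u_n}=\frac{1}{\sqrt 2}.\]
   Context: $(u_n)_{n\ge0}$ is the Thue–Morse sequence with values $\pm1$: $u_n=1$ if the binary expansion of $n$ has an even number of $1$'s and $u_n=-1$ otherwise. Infinite products are the limits of their partial products. *)

theory Defs
  imports "HOL-Analysis.Analysis"
begin

fun s2 :: "nat \<Rightarrow> nat" where
  "s2 n = (if n = 0 then 0 else n mod 2 + s2 (n div 2))"

declare s2.simps[simp del]

definition tm :: "nat \<Rightarrow> int" where
  "tm n = (-1) ^ s2 n"

end

theory Submission
  imports Defs "HOL-Real_Asymp.Real_Asymp"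
begin

definition G :: "real \<Rightarrow> nat \<Rightarrow> real" where
  "G c n = ln (4 * real n + c) - ln (4 * real n + c + 2)"

definition uu :: "nat \<Rightarrow> real" where "uu n = real_of_int (tm n)"

definition SS :: "nat \<Rightarrow> (nat \<Rightarrow> real) \<Rightarrow> real" where
  "SS K f = (\<Sum>n<K. uu n * f n)"

lemma s2_even: "s2 (2*n) = s2 n"
  by (cases "n = 0") (simp_all add: s2.simps[of "2*n"])

lemma s2_odd: "s2 (Suc (2*n)) = Suc (s2 n)"
  by (subst s2.simps) simp

lemma uu_even: "uu (2*n) = uu n"
  by (simp add: uu_def tm_def s2_even)

lemma uu_odd: "uu (Suc (2*n)) = - uu n"
  by (simp add: uu_def tm_def s2_odd)

lemma uu_abs: "\<bar>uu n\<bar> = 1"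
  by (simp add: uu_def tm_def)

lemma SS_split: "SS (2*K) f = SS K (\<lambda>n. f (2*n) - f (2*n+1))"
proof (induction K)
  case 0 then show ?case by (simp add: SS_def)
next
  case (Suc K)
  have A: "SS (2*Suc K) f = SS (2*K) f + (uu (2*K) * f (2*K) + uu (2*K+1) * f (2*K+1))"
    by (simp add: SS_def)
  have B: "uu (2*K) * f (2*K) + uu (2*K+1) * f (2*K+1) = uu K * (f (2*K) - f (2*K+1))"
    by (simp add: uu_even uu_odd right_diff_distrib)
  show ?case unfolding A B Suc by (simp add: SS_def)
qed

lemma limseq_even_odd':
  assumes "(\<lambda>n. f (2 * n)) \<longlonglongrightarrow> (l :: real)"
      and "(\<lambda>n. f (2 * n + 1)) \<longlonglongrightarrow> l"
  shows "f \<longlonglongrightarrow> l"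
proof -
  have ev: "eventually P sequentially"
    if E: "eventually (\<lambda>n. P (2 * n)) sequentially" and O: "eventually (\<lambda>n. P (2 * n + 1)) sequentially"
    for P
  proof -
    from E obtain n_e where A: "\<And>n. n \<ge> n_e \<Longrightarrow> P (2 * n)"
      by (auto simp: eventually_sequentially)
    from O obtain n_o where B: "\<And>n. n \<ge> n_o \<Longrightarrow> P (Suc (2 * n))"
      by (auto simp: eventually_sequentially)
    show ?thesis
      unfolding eventually_sequentially
    proof (intro exI allI impI)
      fix n assume "max (2 * n_e) (2 * n_o + 1) \<le> n" then show "P n"
        by (cases "even n") (auto elim!: evenE oddE intro: A B)
    qed
  qed
  show ?thesis using assms by (auto simp: filterlim_iff intro: ev)
qed

lemma SS_conv:
  assumes f0: "f \<longlonglongrightarrow> 0"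
    and sm: "summable (\<lambda>n. f (2*n) - f (2*n+1))"
    and bo: "(\<lambda>n. f (2*n) - f (2*n+1)) \<in> O(\<lambda>n. 1 / real n ^ 2)"
  shows "convergent (\<lambda>K. SS K f)"
proof -
  have sn: "summable (\<lambda>n. norm (1 / real n ^ 2))"
    using inverse_power_summable[of 2] by (simp add: divide_inverse)
  have "(\<lambda>n. uu n * (f (2*n) - f (2*n+1))) \<in> O(\<lambda>n. f (2*n) - f (2*n+1))"
    by (intro bigoI[where c=1]) (simp add: abs_mult uu_abs)
  with bo have "(\<lambda>n. uu n * (f (2*n) - f (2*n+1))) \<in> O(\<lambda>n. 1 / real n ^ 2)"
    using landau_o.big_trans by blast
  then have "summable (\<lambda>n. uu n * (f (2*n) - f (2*n+1)))"
    using summable_comparison_test_bigo[OF sn] by blast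
  then have "(\<lambda>K. SS K (\<lambda>n. f (2*n) - f (2*n+1))) \<longlonglongrightarrow> (\<Sum>n. uu n * (f (2*n) - f (2*n+1)))"
    unfolding SS_def using summable_LIMSEQ by blast
  then have E: "(\<lambda>K. SS (2*K) f) \<longlonglongrightarrow> (\<Sum>n. uu n * (f (2*n) - f (2*n+1)))"
    by (simp add: SS_split)
  have "(\<lambda>K. uu (2*K) * f (2*K)) \<longlonglongrightarrow> 0"
  proof -
    have "(\<lambda>K. f (2*K)) \<longlonglongrightarrow> 0"
      using LIMSEQ_subseq_LIMSEQ[OF f0, of "\<lambda>K. 2*K"] by (simp add: strict_mono_def o_def)
    then have "(\<lambda>K. norm (uu (2*K) * f (2*K))) \<longlonglongrightarrow> 0"
      by (simp add: abs_mult uu_abs tendsto_rabs_zero_iff)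
    then show ?thesis by (simp add: tendsto_rabs_zero_cancel)
  qed
  from tendsto_add[OF E this] have O: "(\<lambda>K. SS (2*K+1) f) \<longlonglongrightarrow> (\<Sum>n. uu n * (f (2*n) - f (2*n+1)))"
    by (simp add: SS_def)
  show ?thesis using limseq_even_odd'[OF E O] by (auto simp: convergent_def)
qed

lemma sn: "summable (\<lambda>n. norm (1 / real n ^ 2))"
    using inverse_power_summable[of 2] by (simp add: divide_inverse)

lemma Gconv:
  assumes "(\<lambda>n. G c n) \<longlonglongrightarrow> 0"
    "(\<lambda>n. G c (2*n) - G c (2*n+1)) \<in> O(\<lambda>n. 1 / real n ^ 2)"
  shows "convergent (\<lambda>K. SS K (G c))"
  using assms by (intro SS_conv) (auto intro: summable_comparison_test_bigo[OF sn])

lemma conv0: "convergent (\<lambda>K. SS K (G 0))"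
  by (rule Gconv) (unfold G_def, real_asymp+)
lemma conv1: "convergent (\<lambda>K. SS K (G 1))"
  by (rule Gconv) (unfold G_def, real_asymp+)
lemma conv2: "convergent (\<lambda>K. SS K (G 2))"
  by (rule Gconv) (unfold G_def, real_asymp+)
lemma conv3: "convergent (\<lambda>K. SS K (G 3))"
  by (rule Gconv) (unfold G_def, real_asymp+)
lemma conv4: "convergent (\<lambda>K. SS K (G 4))"
  by (rule Gconv) (unfold G_def, real_asymp+)

lemma sub2:
  assumes "convergent X" shows "(\<lambda>K. X (2*K)) \<longlonglongrightarrow> lim X"
  using LIMSEQ_subseq_LIMSEQ[OF convergent_LIMSEQ_iff[THEN iffD1, OF assms], of "\<lambda>K. 2*K"]
  by (simp add: strict_mono_def o_def)

lemma lnmul: "a > 0 \<Longrightarrow> ln (2 * a) = ln 2 + (ln (a::real))"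
  by (simp add: ln_mult)

lemma pairG:
  assumes "4 * real n + c > 0" "c \<ge> 0"
  shows "G (2*c) (2*n) - G (2*c) (2*n+1) = G c n - G (c+1) n"
proof -
  have e1: "4 * real (2*n) + 2*c = 2 * (4*real n + c)" by simp
  have e2: "4 * real (2*n) + 2*c + 2 = 2 * (4*real n + (c+1))" by simp
  have e3: "4 * real (2*n+1) + 2*c = 2 * (4*real n + c + 2)" by simp
  have e4: "4 * real (2*n+1) + 2*c + 2 = 2 * (4*real n + (c+1) + 2)" by simp
  have h1: "ln (2 * (4*real n + c)) = ln 2 + ln (4*real n + c)" using assms by (intro lnmul) simp
  have h2: "ln (2 * (4*real n + (c+1))) = ln 2 + ln (4*real n + (c+1))" using assms by (intro lnmul) simp
  have h3: "ln (2 * (4*real n + c + 2)) = ln 2 + ln (4*real n + c + 2)" using assms by (intro lnmul) simp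
  have h4: "ln (2 * (4*real n + (c+1) + 2)) = ln 2 + ln (4*real n + (c+1) + 2)" using assms by (intro lnmul) simp
  show ?thesis unfolding G_def unfolding e2 e4 unfolding e1 e3 unfolding h1 h2 h3 h4 by linarith
qed

theorem mainTheorem3:
  shows "(\<lambda>N. \<Prod>n<N. ((real (4*n+3) * real (2*n+2)) / (real (4*n+5) * real (2*n+3))) powi tm n)
           \<longlonglongrightarrow> 1 / sqrt 2"
proof -
  define l where "l c = lim (\<lambda>K. SS K (G c))" for c
  have L: "(\<lambda>K. SS K (G c)) \<longlonglongrightarrow> l c" if "convergent (\<lambda>K. SS K (G c))" for c
    using that by (simp add: l_def convergent_LIMSEQ_iff)
  have L2: "(\<lambda>K. SS (2*K) (G c)) \<longlonglongrightarrow> l c" if "convergent (\<lambda>K. SS K (G c))" for c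
    using sub2[OF that] by (simp add: l_def)
  have r4: "l 4 = l 2 - l 3"
  proof -
    have "SS (2*K) (G 4) = SS K (G 2) - SS K (G 3)" for K
    proof -
      have "SS (2*K) (G 4) = SS K (\<lambda>n. G 2 n - G 3 n)"
        unfolding SS_split using pairG[of _ 2] by (simp add: SS_def)
      then show ?thesis by (simp add: SS_def sum_subtractf algebra_simps)
    qed
    then have "(\<lambda>K. SS (2*K) (G 4)) \<longlonglongrightarrow> l 2 - l 3"
      using tendsto_diff[OF L[OF conv2] L[OF conv3]] by simp
    then show ?thesis using L2[OF conv4] LIMSEQ_unique by blast
  qed
  have r2: "l 2 = l 1 - l 2"
  proof -
    have "SS (2*K) (G 2) = SS K (G 1) - SS K (G 2)" for K
    proof -
      have "SS (2*K) (G 2) = SS K (\<lambda>n. G 1 n - G 2 n)"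
        unfolding SS_split using pairG[of _ 1] by (simp add: SS_def)
      then show ?thesis by (simp add: SS_def sum_subtractf algebra_simps)
    qed
    then have "(\<lambda>K. SS (2*K) (G 2)) \<longlonglongrightarrow> l 1 - l 2"
      using tendsto_diff[OF L[OF conv1] L[OF conv2]] by simp
    then show ?thesis using L2[OF conv2] LIMSEQ_unique by blast
  qed
  have r0: "l 1 = - ln 2"
  proof -
    have "SS (2*Suc K) (G 0) = SS (Suc K) (G 0) - SS (Suc K) (G 1) - ln 2" for K
    proof -
      have p: "G 0 (2*n) - G 0 (2*n+1) = G 0 n - G 1 n - (if n = 0 then ln 2 else 0)" for n
      proof (cases "n = 0")
        case True
        have "ln (6::real) = ln 2 + ln 3" using ln_mult[of 2 3] by simp
        moreover have "ln (4::real) = ln 2 + ln 2" using ln_mult[of 2 2] by simp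
        ultimately show ?thesis using True by (simp add: G_def)
      next
        case False
        then show ?thesis using pairG[of n 0] by simp
      qed
      have "SS (2*Suc K) (G 0) = SS (Suc K) (\<lambda>n. G 0 n - G 1 n - (if n = 0 then ln 2 else 0))"
        unfolding SS_split p ..
      also have "\<dots> = SS (Suc K) (G 0) - SS (Suc K) (G 1) - uu 0 * ln 2"
      proof -
        have "(\<Sum>n<Suc K. uu n * (if n = 0 then ln 2 else 0)) = uu 0 * ln 2"
          by (simp add: if_distrib sum.delta cong: if_cong)
        then show ?thesis by (simp add: SS_def sum_subtractf right_diff_distrib)
      qed
      also have "uu 0 = 1" by (simp add: uu_def tm_def s2.simps)
      finally show ?thesis by simp
    qed
    moreover have "(\<lambda>K. SS (Suc K) (G 0) - SS (Suc K) (G 1) - ln 2) \<longlonglongrightarrow> l 0 - l 1 - ln 2"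
      by (intro tendsto_intros LIMSEQ_Suc L conv0 conv1)
    ultimately have A: "(\<lambda>K. SS (2*Suc K) (G 0)) \<longlonglongrightarrow> l 0 - l 1 - ln 2" by simp
    have "(\<lambda>K. SS (2*Suc K) (G 0)) \<longlonglongrightarrow> l 0"
      using LIMSEQ_Suc[OF L2[OF conv0]] by simp
    with A have "l 0 = l 0 - l 1 - ln 2" using LIMSEQ_unique by blast
    then show ?thesis by simp
  qed
  have val: "l 3 + l 4 = - ln 2 / 2" using r4 r2 r0 by simp
  have rho: "ln ((real (4*n+3) * real (2*n+2)) / (real (4*n+5) * real (2*n+3))) = G 3 n + G 4 n" for n
  proof -
    have "ln (real (2*n+2)) = ln (4 * real n + 4) - ln 2"
      using lnmul[of "real (2*n+2)"] by (simp add: algebra_simps)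
    moreover have "ln (real (2*n+3)) = ln (4 * real n + 4 + 2) - ln 2"
      using lnmul[of "real (2*n+3)"] by (simp add: algebra_simps)
    moreover have "ln (a*b/(c*d)) = ln a + ln b - ln c - ln d" if "a>0" "b>0" "c>0" "d>0" for a b c d :: real
      using that by (simp add: ln_div ln_mult)
    moreover have "real (4*n+3) = 4 * real n + 3" "real (4*n+5) = 4 * real n + 3 + 2" by simp_all
    ultimately show ?thesis
      by (simp only: G_def)
  qed
  have prodeq: "(\<Prod>n<N. ((real (4*n+3) * real (2*n+2)) / (real (4*n+5) * real (2*n+3))) powi tm n)
       = exp (SS N (G 3) + SS N (G 4))" for N
  proof -
    have "(\<Prod>n<N. ((real (4*n+3) * real (2*n+2)) / (real (4*n+5) * real (2*n+3))) powi tm n)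
        = (\<Prod>n<N. exp (uu n * (G 3 n + G 4 n)))"
    proof (rule prod.cong[OF refl])
      have pw: "x powi k = exp (real_of_int k * ln x)" if "x>0" for x::real and k::int
        using powr_real_of_int'[of x k] that by (simp add: powr_def mult.commute)
      fix n
      have pos: "(real (4*n+3) * real (2*n+2)) / (real (4*n+5) * real (2*n+3)) > 0" by simp
      show "((real (4*n+3) * real (2*n+2)) / (real (4*n+5) * real (2*n+3))) powi tm n
          = exp (uu n * (G 3 n + G 4 n))"
        unfolding pw[OF pos] rho uu_def ..
    qed
    also have "\<dots> = exp (SS N (G 3) + SS N (G 4))"
      by (simp add: SS_def exp_sum[symmetric] sum.distrib[symmetric] distrib_left)
    finally show ?thesis .
  qed
  have "(\<lambda>N. exp (SS N (G 3) + SS N (G 4))) \<longlonglongrightarrow> exp (l 3 + l 4)"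
    by (intro tendsto_intros L conv3 conv4)
  moreover have "exp (l 3 + l 4) = 1 / sqrt 2"
  proof -
    have sq: "sqrt 2 = exp (1/2 * ln 2)" using powr_half_sqrt[of 2] by (simp add: powr_def)
    have "exp (l 3 + l 4) = exp (- (1/2 * ln 2))" using val by simp
    also have "\<dots> = inverse (exp (1/2 * ln 2))" by (rule exp_minus)
    also have "\<dots> = 1 / sqrt 2" by (simp only: sq inverse_eq_divide)
    finally show ?thesis .
  qed
  ultimately show ?thesis unfolding prodeq by simp
qed

end
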